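(* Let $\mathcal H$ be a hypothesis class with coVC dimension $k>0$. For any sample $S$ not realizable by $\mathcal H$ and any $h_1,\dots,h_T\in\mathcal H$, there is $(x,y)\in S$ such that $\frac1T\sum_{t=1}^T1[h_t(x)\ne y]\ge\frac1k$.
   Context: A sample is a finite sequence of examples $(x,y)\in\mathcal X\times\{\pm1\}$; it is realizable by $\mathcal H$ if some $h\in\mathcal H$ agrees with all its examples. A subsample of $S$ is a sample all of whose examples appear in $S$; the coVC dimension of $\mathcal H$ is the smallest $k$ such that every non-realizable sample has a non-realizable subsample of size at most $k$. *)

theory Defs
  imports Complex_Main
begin

text \<open>Labels in {+1,-1} are encoded as bool (True = +1, False = -1).
  A sample is a finite list of examples; a hypothesis class is a set of
  functions from the domain to the labels.\<close>

type_synonym 'a sample = "('a \<times> bool) list"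

definition realizable :: "('a \<Rightarrow> bool) set \<Rightarrow> 'a sample \<Rightarrow> bool" where
  "realizable H S \<longleftrightarrow> (\<exists>h\<in>H. \<forall>(x, y)\<in>set S. h x = y)"

definition subsample :: "'a sample \<Rightarrow> 'a sample \<Rightarrow> bool" where
  "subsample S' S \<longleftrightarrow> set S' \<subseteq> set S"

definition covc_bound :: "('a \<Rightarrow> bool) set \<Rightarrow> nat \<Rightarrow> bool" where
  "covc_bound H k \<longleftrightarrow> (\<forall>S. \<not> realizable H S \<longrightarrow>
      (\<exists>S'. subsample S' S \<and> length S' \<le> k \<and> \<not> realizable H S'))"

definition covc_dim :: "('a \<Rightarrow> bool) set \<Rightarrow> nat \<Rightarrow> bool" where
  "covc_dim H k \<longleftrightarrow> covc_bound H k \<and> (\<forall>j<k. \<not> covc_bound H j)"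

end

theory Submission
  imports Defs
begin

theorem claim1:
  fixes H :: "('a \<Rightarrow> bool) set" and k :: nat and S :: "'a sample"
    and T :: nat and h :: "nat \<Rightarrow> 'a \<Rightarrow> bool"
  assumes "covc_dim H k" and "k > 0"
    and "\<not> realizable H S"
    and "T > 0" and "\<forall>t\<in>{1..T}. h t \<in> H"
  shows "\<exists>(x, y)\<in>set S.
           (\<Sum>t=1..T. if h t x \<noteq> y then 1 else 0 :: real) / real T \<ge> 1 / real k"
proof (rule ccontr)
  define e where "e = (\<lambda>p t. if h t (fst p) \<noteq> snd p then 1 else (0::real))"
  assume neg: "\<not> ?thesis"
  obtain S' where S': "set S' \<subseteq> set S" "length S' \<le> k" "\<not> realizable H S'"
    using assms(1,3) unfolding covc_dim_def covc_bound_def subsample_def by blast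
  let ?A = "set S'"
  have cardA: "card ?A \<le> k" using S'(2) card_length order_trans by blast
  have small: "(\<Sum>t=1..T. e p t) < real T / real k" if "p \<in> ?A" for p
  proof -
    obtain x y where p: "p = (x,y)" by force
    have "\<not> (\<Sum>t=1..T. if h t x \<noteq> y then 1 else 0 :: real) / real T \<ge> 1 / real k"
      using neg that S'(1) p by blast
    then have lt: "(\<Sum>t=1..T. if h t x \<noteq> y then 1 else 0 :: real) / real T < 1 / real k"
      by linarith
    have "(\<Sum>t=1..T. if h t x \<noteq> y then 1 else 0 :: real)
        = ((\<Sum>t=1..T. if h t x \<noteq> y then 1 else 0 :: real) / real T) * real T"
      using assms(4) by simp
    also have "\<dots> < (1 / real k) * real T"
      using lt assms(4) by (intro mult_strict_right_mono) auto
    finally show ?thesis using p unfolding e_def by simp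
  qed
  have each: "1 \<le> (\<Sum>p\<in>?A. e p t)" if "t \<in> {1..T}" for t
  proof -
    have "h t \<in> H" using assms(5) that by blast
    then obtain p where p: "p \<in> ?A" "h t (fst p) \<noteq> snd p"
      using S'(3) unfolding realizable_def by fastforce
    have "e p t \<le> (\<Sum>p\<in>?A. e p t)"
      by (rule member_le_sum) (auto simp: e_def p)
    then show ?thesis using p by (simp add: e_def)
  qed
  have "real T = (\<Sum>t\<in>{1..T}. (1::real))" by simp
  also have "\<dots> \<le> (\<Sum>t=1..T. \<Sum>p\<in>?A. e p t)" by (rule sum_mono) (rule each)
  also have "\<dots> = (\<Sum>p\<in>?A. \<Sum>t=1..T. e p t)" by (rule sum.swap)
  finally have ge: "real T \<le> (\<Sum>p\<in>?A. \<Sum>t=1..T. e p t)" .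
  have ne: "?A \<noteq> {}"
  proof
    assume "?A = {}"
    have "h 1 \<in> H" using assms(4,5) by simp
    with \<open>?A = {}\<close> have "realizable H S'" unfolding realizable_def by auto
    then show False using S'(3) by blast
  qed
  have "(\<Sum>p\<in>?A. \<Sum>t=1..T. e p t) < (\<Sum>p\<in>?A. real T / real k)"
    using small ne by (intro sum_strict_mono) auto
  also have "\<dots> = real (card ?A) * real T / real k" by simp
  also have "\<dots> \<le> real k * real T / real k"
    using cardA assms(2) by (intro divide_right_mono mult_right_mono) auto
  also have "\<dots> = real T" using assms(2) by simp
  finally show False using ge by simp
qed

end
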